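(* Let $H$ be a Mealy machine from $X$ to $Y$ and $M$ a Mealy machine from $X$ to $Z$ such that for all $\overline{x},\overline{x}'\in X^*$, $\lambda_H(\overline{x})=\lambda_H(\overline{x}')$ implies $\lambda_M(\overline{x})=\lambda_M(\overline{x}')$. Define the observation machine $N$ from $Y$ to $Z$ as follows: $S_N$ is the set of pairs $(s_H,s_M)\in S_H\times S_M$ such that $\delta_H(\overline{x})=s_H$ and $\delta_M(\overline{x})=s_M$ for some $\overline{x}\in X^*$; $r_N=(r_H,r_M)$; for $(s_H,s_M)\in S_N$ and $y\in Y$ let $V=\{x\in X:\lambda_H(s_H,x)=y\}$; if $V=\emptyset$ then $((s_H,s_M),y)\notin D_N$; otherwise $((s_H,s_M),y)\in D_N$, $\lambda_N((s_H,s_M),y)$ is the common value of $\lambda_M(s_M,x)$ for $x\in V$, and $\Delta_N((s_H,s_M),y)=\{(\delta_H(s_H,x),\delta_M(s_M,x)):x\in V\}$. Then $N$ is well defined, and a Mealy machine $T$ from $Y$ to $Z$ satisfies $T\circ H\equiv M$ if and only if $T$ implements $N$.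
   Context: A Mealy machine from $X$ to $Y$ is a tuple $(X,Y,S,\delta,\lambda,r)$ with $\delta:S\times X\to S$, $\lambda:S\times X\to Y$ total; $\delta(\overline{x}),\lambda(\overline{x})$ denote the state reached and output word produced on input $\overline{x}$ from $r$. $T\circ H$ is the cascade: states $S_H\times S_T$, initial $(r_H,r_T)$, and with $y=\lambda_H(s_H,x)$, $\delta((s_H,s_T),x)=(\delta_H(s_H,x),\delta_T(s_T,y))$, $\lambda((s_H,s_T),x)=\lambda_T(s_T,y)$; $\equiv$ means same output on every input word. An observation machine (OM) from $Y$ to $Z$ is a tuple $(Y,Z,S,D,\Delta,\lambda,r)$ with $D\subseteq S\times Y$, $\Delta:D\to 2^S\setminus\{\emptyset\}$, $\lambda:D\to Z$. A run on $y_0\dots y_n$ from $s_0$ is $s_0,y_0,z_0,s_1,\dots,s_{n+1}$ with $(s_i,y_i)\in D$, $s_{i+1}\in\Delta(s_i,y_i)$, $z_i=\lambda(s_i,y_i)$; $\Omega_N$ is the set of words having a run from $r$; when all runs from $r$ on each $\overline{y}\in\Omega_N$ have the same output $\lambda_N(\overline{y})$, a Mealy machine $T$ implements $N$ if $\lambda_T(\overline{y})=\lambda_N(\overline{y})$ for all $\overline{y}\in\Omega_N$. *)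

theory Defs
  imports Main
begin

text \<open>A Mealy machine with state type 's (the state set S is the whole type),
  input alphabet 'x and output alphabet 'y; transition and output functions are total.\<close>
record ('s, 'x, 'y) mealy =
  m_init  :: 's
  m_trans :: "'s \<Rightarrow> 'x \<Rightarrow> 's"
  m_out   :: "'s \<Rightarrow> 'x \<Rightarrow> 'y"

fun mstate_from :: "('s, 'x, 'y) mealy \<Rightarrow> 's \<Rightarrow> 'x list \<Rightarrow> 's" where
  "mstate_from M s [] = s"
| "mstate_from M s (x # xs) = mstate_from M (m_trans M s x) xs"

fun mouts_from :: "('s, 'x, 'y) mealy \<Rightarrow> 's \<Rightarrow> 'x list \<Rightarrow> 'y list" where
  "mouts_from M s [] = []"
| "mouts_from M s (x # xs) = m_out M s x # mouts_from M (m_trans M s x) xs"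

definition mstate :: "('s, 'x, 'y) mealy \<Rightarrow> 'x list \<Rightarrow> 's" where
  "mstate M xs = mstate_from M (m_init M) xs"

definition mouts :: "('s, 'x, 'y) mealy \<Rightarrow> 'x list \<Rightarrow> 'y list" where
  "mouts M xs = mouts_from M (m_init M) xs"

definition cascade :: "('st, 'y, 'z) mealy \<Rightarrow> ('sh, 'x, 'y) mealy \<Rightarrow> ('sh \<times> 'st, 'x, 'z) mealy" where
  "cascade T H = \<lparr> m_init = (m_init H, m_init T),
     m_trans = (\<lambda>(sh, st) x. (m_trans H sh x, m_trans T st (m_out H sh x))),
     m_out = (\<lambda>(sh, st) x. m_out T st (m_out H sh x)) \<rparr>"

definition mealy_equiv :: "('s1, 'x, 'y) mealy \<Rightarrow> ('s2, 'x, 'y) mealy \<Rightarrow> bool" where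
  "mealy_equiv A B \<longleftrightarrow> (\<forall>xs. mouts A xs = mouts B xs)"

text \<open>Delta and lambda are total functions in HOL but only meaningful on om_dom.\<close>
record ('s, 'y, 'z) om =
  om_states :: "'s set"
  om_dom    :: "('s \<times> 'y) set"
  om_Delta  :: "'s \<Rightarrow> 'y \<Rightarrow> 's set"
  om_out    :: "'s \<Rightarrow> 'y \<Rightarrow> 'z"
  om_init   :: 's

definition om_wf :: "('s, 'y, 'z) om \<Rightarrow> bool" where
  "om_wf N \<longleftrightarrow> om_init N \<in> om_states N
     \<and> om_dom N \<subseteq> om_states N \<times> UNIV
     \<and> (\<forall>(s, y) \<in> om_dom N. om_Delta N s y \<noteq> {} \<and> om_Delta N s y \<subseteq> om_states N)"

fun om_run :: "('s, 'y, 'z) om \<Rightarrow> 's \<Rightarrow> 'y list \<Rightarrow> 'z list \<Rightarrow> bool" where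
  "om_run N s [] zs = (zs = [])"
| "om_run N s (y # ys) zs =
     ((s, y) \<in> om_dom N \<and>
      (\<exists>s' \<in> om_Delta N s y. \<exists>zs'. zs = om_out N s y # zs' \<and> om_run N s' ys zs'))"

definition om_Omega :: "('s, 'y, 'z) om \<Rightarrow> 'y list set" where
  "om_Omega N = {ys. \<exists>zs. om_run N (om_init N) ys zs}"

definition om_deterministic :: "('s, 'y, 'z) om \<Rightarrow> bool" where
  "om_deterministic N \<longleftrightarrow>
     (\<forall>ys zs zs'. om_run N (om_init N) ys zs \<and> om_run N (om_init N) ys zs' \<longrightarrow> zs = zs')"

definition om_outs :: "('s, 'y, 'z) om \<Rightarrow> 'y list \<Rightarrow> 'z list" where
  "om_outs N ys = (THE zs. om_run N (om_init N) ys zs)"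

definition implements :: "('st, 'y, 'z) mealy \<Rightarrow> ('s, 'y, 'z) om \<Rightarrow> bool" where
  "implements T N \<longleftrightarrow> (\<forall>ys \<in> om_Omega N. mouts T ys = om_outs N ys)"

definition obs_machine :: "('sh, 'x, 'y) mealy \<Rightarrow> ('sm, 'x, 'z) mealy \<Rightarrow> ('sh \<times> 'sm, 'y, 'z) om" where
  "obs_machine H M = \<lparr>
     om_states = {(sh, sm). \<exists>xs. mstate H xs = sh \<and> mstate M xs = sm},
     om_dom = {((sh, sm), y). (sh, sm) \<in> {(sh, sm). \<exists>xs. mstate H xs = sh \<and> mstate M xs = sm}
                               \<and> {x. m_out H sh x = y} \<noteq> {}},
     om_Delta = (\<lambda>(sh, sm) y. {(m_trans H sh x, m_trans M sm x) | x. m_out H sh x = y}),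
     om_out = (\<lambda>(sh, sm) y. m_out M sm (SOME x. m_out H sh x = y)),
     om_init = (m_init H, m_init M) \<rparr>"

end

theory Submission
  imports Defs
begin

lemma mstate_from_append: "mstate_from M s (xs @ ys) = mstate_from M (mstate_from M s xs) ys"
  by (induction xs arbitrary: s) auto

lemma mouts_from_append: "mouts_from M s (xs @ ys) = mouts_from M s xs @ mouts_from M (mstate_from M s xs) ys"
  by (induction xs arbitrary: s) auto

lemma cascade_outs: "mouts_from (cascade T H) (sh, st) xs = mouts_from T st (mouts_from H sh xs)"
  by (induction xs arbitrary: sh st) (auto simp: cascade_def)

lemma key:
  assumes A: "\<forall>xs xs'. mouts H xs = mouts H xs' \<longrightarrow> mouts M xs = mouts M xs'"
    and "m_out H (mstate H xs) x = m_out H (mstate H xs) x'"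
  shows "m_out M (mstate M xs) x = m_out M (mstate M xs) x'"
proof -
  have "mouts H (xs @ [x]) = mouts H (xs @ [x'])"
    using assms(2) by (simp add: mouts_def mstate_def mouts_from_append)
  then have "mouts M (xs @ [x]) = mouts M (xs @ [x'])" using A by blast
  then show ?thesis by (simp add: mouts_def mstate_def mouts_from_append)
qed

lemma run_iff:
  assumes A: "\<forall>xs xs'. mouts H xs = mouts H xs' \<longrightarrow> mouts M xs = mouts M xs'"
  shows "om_run (obs_machine H M) (mstate H xs, mstate M xs) ys zs \<longleftrightarrow>
    (\<exists>xs'. mouts_from H (mstate H xs) xs' = ys \<and> zs = mouts_from M (mstate M xs) xs')"
proof (induction ys arbitrary: xs zs)
  case Nil
  show ?case
  proof
    assume "\<exists>xs'. mouts_from H (mstate H xs) xs' = [] \<and> zs = mouts_from M (mstate M xs) xs'"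
    then obtain xs' where "mouts_from H (mstate H xs) xs' = []" "zs = mouts_from M (mstate M xs) xs'" by blast
    then show "om_run (obs_machine H M) (mstate H xs, mstate M xs) [] zs" by (cases xs') auto
  qed (auto intro: exI[of _ "[]"])
next
  case (Cons y ys)
  have st: "mstate H (xs @ [x]) = m_trans H (mstate H xs) x"
       "mstate M (xs @ [x]) = m_trans M (mstate M xs) x" for x
    by (simp_all add: mstate_def mstate_from_append)
  show ?case
  proof
    assume r: "om_run (obs_machine H M) (mstate H xs, mstate M xs) (y # ys) zs"
    then obtain x zs' where x: "m_out H (mstate H xs) x = y"
      and zs: "zs = om_out (obs_machine H M) (mstate H xs, mstate M xs) y # zs'"
      and r': "om_run (obs_machine H M) (m_trans H (mstate H xs) x, m_trans M (mstate M xs) x) ys zs'"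
      by (auto simp: obs_machine_def)
    from r' Cons.IH[of "xs @ [x]" zs'] obtain xs' where
      "mouts_from H (m_trans H (mstate H xs) x) xs' = ys"
      "zs' = mouts_from M (m_trans M (mstate M xs) x) xs'"
      by (auto simp: st)
    moreover have "om_out (obs_machine H M) (mstate H xs, mstate M xs) y = m_out M (mstate M xs) x"
      using key[OF A, of xs "SOME x. m_out H (mstate H xs) x = y" x] x
      by (simp add: obs_machine_def) (metis (mono_tags, lifting) someI)
    ultimately show "\<exists>xs'. mouts_from H (mstate H xs) xs' = y # ys \<and> zs = mouts_from M (mstate M xs) xs'"
      using x zs by (intro exI[of _ "x # xs'"]) auto
  next
    assume "\<exists>xs'. mouts_from H (mstate H xs) xs' = y # ys \<and> zs = mouts_from M (mstate M xs) xs'"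
    then obtain xs0 where xs0: "mouts_from H (mstate H xs) xs0 = y # ys" "zs = mouts_from M (mstate M xs) xs0" by blast
    then obtain x xs' where x: "m_out H (mstate H xs) x = y"
      and ys: "mouts_from H (m_trans H (mstate H xs) x) xs' = ys"
      and zs: "zs = m_out M (mstate M xs) x # mouts_from M (m_trans M (mstate M xs) x) xs'"
      by (cases xs0) auto
    have r': "om_run (obs_machine H M) (m_trans H (mstate H xs) x, m_trans M (mstate M xs) x) ys
         (mouts_from M (m_trans M (mstate M xs) x) xs')"
      using Cons.IH[of "xs @ [x]"] ys by (auto simp: st)
    have o: "om_out (obs_machine H M) (mstate H xs, mstate M xs) y = m_out M (mstate M xs) x"
      using key[OF A, of xs "SOME x. m_out H (mstate H xs) x = y" x] x
      by (simp add: obs_machine_def) (metis (mono_tags, lifting) someI)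
    have d: "((mstate H xs, mstate M xs), y) \<in> om_dom (obs_machine H M)"
      using x by (auto simp: obs_machine_def)
    have D: "(m_trans H (mstate H xs) x, m_trans M (mstate M xs) x) \<in> om_Delta (obs_machine H M) (mstate H xs, mstate M xs) y"
      using x by (auto simp: obs_machine_def)
    show "om_run (obs_machine H M) (mstate H xs, mstate M xs) (y # ys) zs"
      using d D r' o zs by auto
  qed
qed

lemma run_init:
  assumes A: "\<forall>xs xs'. mouts H xs = mouts H xs' \<longrightarrow> mouts M xs = mouts M xs'"
  shows "om_run (obs_machine H M) (om_init (obs_machine H M)) ys zs \<longleftrightarrow>
    (\<exists>xs'. mouts H xs' = ys \<and> zs = mouts M xs')"
  using run_iff[OF A, of "[]" ys zs]
  by (simp add: obs_machine_def mstate_def mouts_def)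

theorem proposition2:
  fixes H :: "('sh, 'x, 'y) mealy" and M :: "('sm, 'x, 'z) mealy"
  assumes "\<forall>xs xs'. mouts H xs = mouts H xs' \<longrightarrow> mouts M xs = mouts M xs'"
  shows "om_wf (obs_machine H M)
    \<and> (\<forall>p \<in> om_states (obs_machine H M). \<forall>y x x'.
          m_out H (fst p) x = y \<and> m_out H (fst p) x' = y \<longrightarrow> m_out M (snd p) x = m_out M (snd p) x')
    \<and> om_deterministic (obs_machine H M)
    \<and> (\<forall>T :: ('st, 'y, 'z) mealy.
          mealy_equiv (cascade T H) M \<longleftrightarrow> implements T (obs_machine H M))"
proof (intro conjI)
  note A = assms
  show "om_wf (obs_machine H M)"
    unfolding om_wf_def
  proof (intro conjI)
    show "om_init (obs_machine H M) \<in> om_states (obs_machine H M)"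
      by (auto simp: obs_machine_def mstate_def intro: exI[of _ "[]"])
    show "om_dom (obs_machine H M) \<subseteq> om_states (obs_machine H M) \<times> UNIV"
      by (auto simp: obs_machine_def)
    show "\<forall>(s, y)\<in>om_dom (obs_machine H M).
       om_Delta (obs_machine H M) s y \<noteq> {} \<and> om_Delta (obs_machine H M) s y \<subseteq> om_states (obs_machine H M)"
    proof (intro ballI, clarify)
      fix sh sm y
      assume "((sh, sm), y) \<in> om_dom (obs_machine H M)"
      then obtain xs x where r: "sh = mstate H xs" "sm = mstate M xs" and x: "m_out H sh x = y"
        by (auto simp: obs_machine_def)
      have "(m_trans H sh x, m_trans M sm x) \<in> om_Delta (obs_machine H M) (sh, sm) y"
        using x by (auto simp: obs_machine_def)
      moreover have "om_Delta (obs_machine H M) (sh, sm) y \<subseteq> om_states (obs_machine H M)"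
      proof
        fix p assume "p \<in> om_Delta (obs_machine H M) (sh, sm) y"
        then obtain x' where "p = (m_trans H sh x', m_trans M sm x')" by (auto simp: obs_machine_def)
        then have "p = (mstate H (xs @ [x']), mstate M (xs @ [x']))"
          using r by (simp add: mstate_def mstate_from_append)
        then show "p \<in> om_states (obs_machine H M)" by (auto simp: obs_machine_def)
      qed
      ultimately show "om_Delta (obs_machine H M) (sh, sm) y \<noteq> {} \<and>
         om_Delta (obs_machine H M) (sh, sm) y \<subseteq> om_states (obs_machine H M)" by blast
    qed
  qed
  show "\<forall>p \<in> om_states (obs_machine H M). \<forall>y x x'.
          m_out H (fst p) x = y \<and> m_out H (fst p) x' = y \<longrightarrow> m_out M (snd p) x = m_out M (snd p) x'"
  proof (intro ballI allI impI)
    fix p y x x'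
    assume p: "p \<in> om_states (obs_machine H M)" and h: "m_out H (fst p) x = y \<and> m_out H (fst p) x' = y"
    from p obtain xs where "fst p = mstate H xs" "snd p = mstate M xs" by (auto simp: obs_machine_def)
    then show "m_out M (snd p) x = m_out M (snd p) x'" using key[OF A, of xs x x'] h by simp
  qed
  show "om_deterministic (obs_machine H M)"
    unfolding om_deterministic_def run_init[OF A] by (metis A)
  have outs: "om_outs (obs_machine H M) (mouts H xs) = mouts M xs" for xs
    unfolding om_outs_def run_init[OF A]
    by (rule the_equality) (blast, metis A)
  have Om: "om_Omega (obs_machine H M) = range (mouts H)"
    unfolding om_Omega_def run_init[OF A] by auto
  show "\<forall>T :: ('st, 'y, 'z) mealy.
          mealy_equiv (cascade T H) M \<longleftrightarrow> implements T (obs_machine H M)"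
  proof
    fix T :: "('st, 'y, 'z) mealy"
    have c: "mouts (cascade T H) xs = mouts T (mouts H xs)" for xs
    proof -
      have "m_init (cascade T H) = (m_init H, m_init T)" by (simp add: cascade_def)
      then show ?thesis by (simp add: mouts_def cascade_outs)
    qed
    show "mealy_equiv (cascade T H) M \<longleftrightarrow> implements T (obs_machine H M)"
      unfolding mealy_equiv_def implements_def Om c by (auto simp: outs)
  qed
qed

end
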